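(* Let $A$ be a commutative ring and $\mathfrak{p}\subseteq A$ a prime ideal. If $A$ is totally $\sigma_{A\setminus\mathfrak{p}}$-artinian, then $\mathfrak{p}$ is a minimal prime ideal of $A$.
   Context: For a multiplicatively closed set $\Sigma\subseteq A$, $\sigma_\Sigma$ is the hereditary torsion theory with Gabriel filter $\mathcal{L}(\sigma_\Sigma)=\{\mathfrak{a}:\mathfrak{a}\cap\Sigma\ne\varnothing\}$. For a hereditary torsion theory $\tau$ with Gabriel filter $\mathcal{L}(\tau)$, $A$ is totally $\tau$-artinian if for every descending chain of ideals $\mathfrak{a}_1\supseteq\mathfrak{a}_2\supseteq\cdots$ there exist $m$ and $\mathfrak{h}\in\mathcal{L}(\tau)$ with $\mathfrak{a}_m\mathfrak{h}\subseteq\mathfrak{a}_s$ for all $s\ge m$. *)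

theory Defs
  imports "HOL-Algebra.Ideal_Product"
begin

text \<open>Gabriel filter of the hereditary torsion theory sigma_Sigma associated with a
  multiplicatively closed subset Sigma of the ring: ideals meeting Sigma.\<close>
definition gabriel_filter_mcs :: "('a, 'b) ring_scheme \<Rightarrow> 'a set \<Rightarrow> 'a set set" where
  "gabriel_filter_mcs R S = {a. ideal a R \<and> a \<inter> S \<noteq> {}}"

definition totally_tau_artinian :: "('a, 'b) ring_scheme \<Rightarrow> 'a set set \<Rightarrow> bool" where
  "totally_tau_artinian R L \<longleftrightarrow>
     (\<forall>a :: nat \<Rightarrow> 'a set. (\<forall>n. ideal (a n) R) \<and> (\<forall>n. a (Suc n) \<subseteq> a n) \<longrightarrow>
        (\<exists>m. \<exists>h \<in> L. \<forall>s \<ge> m. a m \<cdot>\<^bsub>R\<^esub> h \<subseteq> a s))"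

definition minimal_prime :: "'a set \<Rightarrow> ('a, 'b) ring_scheme \<Rightarrow> bool" where
  "minimal_prime P R \<longleftrightarrow> primeideal P R \<and> (\<forall>Q. primeideal Q R \<and> Q \<subseteq> P \<longrightarrow> Q = P)"

end

theory Submission
  imports Defs
begin

lemma pow_in_prime:
  fixes R (structure)
  assumes "primeideal Q R" "x \<in> carrier R" "x [^]\<^bsub>R\<^esub> (n::nat) \<in> Q"
  shows "x \<in> Q"
  using assms(3)
proof (induction n)
  case 0
  interpret primeideal Q R by fact
  have "\<one>\<^bsub>R\<^esub> \<in> Q" using 0 by simp
  hence "Q = carrier R" using one_imp_carrier by blast
  with I_notcarr show ?case by blast
next
  case (Suc n)
  interpret primeideal Q R by fact
  have "x [^] n \<otimes> x \<in> Q" using Suc.prems by simp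
  hence "x [^] n \<in> Q \<or> x \<in> Q" using I_prime assms(2) by simp
  thus ?case using Suc.IH by blast
qed

theorem mainTheorem14:
  fixes R (structure)
  assumes "cring R"
    and "primeideal p R"
    and "totally_tau_artinian R (gabriel_filter_mcs R (carrier R - p))"
  shows "minimal_prime p R"
proof -
  interpret cring R by fact
  interpret P: primeideal p R by fact
  have "Q = p" if Qp: "primeideal Q R" "Q \<subseteq> p" for Q
  proof
    show "Q \<subseteq> p" by fact
    show "p \<subseteq> Q"
    proof
      fix x assume xp: "x \<in> p"
      have xc: "x \<in> carrier R" using xp P.a_subset by blast
      define a where "a n = PIdl (x [^] (n::nat))" for n
      have ai: "ideal (a n) R" for n unfolding a_def by (simp add: cgenideal_ideal xc)
      have dec: "a (Suc n) \<subseteq> a n" for n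
      proof
        fix z assume "z \<in> a (Suc n)"
        then obtain y where y: "y \<in> carrier R" "z = y \<otimes> x [^] Suc n"
          unfolding a_def cgenideal_def by blast
        have "z = (y \<otimes> x) \<otimes> x [^] n"
          using y xc by (simp add: m_ac)
        thus "z \<in> a n" unfolding a_def cgenideal_def using y xc by blast
      qed
      from assms(3) ai dec obtain m h where
        h: "h \<in> gabriel_filter_mcs R (carrier R - p)" and
        mh: "\<forall>s\<ge>m. a m \<cdot> h \<subseteq> a s"
        unfolding totally_tau_artinian_def by blast
      from h obtain t where t: "t \<in> h" "t \<in> carrier R" "t \<notin> p"
        unfolding gabriel_filter_mcs_def by blast
      have "x [^] m \<in> a m" unfolding a_def using cgenideal_self xc by simp
      hence "x [^] m \<otimes> t \<in> a m \<cdot> h" using t(1) by (rule ideal_prod.prod)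
      hence "x [^] m \<otimes> t \<in> a (Suc m)" using mh by (meson le_SucI order_refl subsetD)
      then obtain r where r: "r \<in> carrier R" "x [^] m \<otimes> t = r \<otimes> x [^] Suc m"
        unfolding a_def cgenideal_def by blast
      have eq: "x [^] m \<otimes> (t \<ominus> x \<otimes> r) = \<zero>"
      proof -
        have c1: "x [^] m \<in> carrier R" "x \<otimes> r \<in> carrier R" using xc r by auto
        have e2: "x [^] m \<otimes> (x \<otimes> r) = x [^] m \<otimes> t"
          unfolding r(2) using xc r c1 by (simp add: m_ac)
        have "x [^] m \<otimes> (t \<ominus> x \<otimes> r) = x [^] m \<otimes> t \<oplus> x [^] m \<otimes> (\<ominus> (x \<otimes> r))"
          unfolding minus_eq using c1 t(2) by (rule r_distr[OF _ _ c1(1)] | simp add: r_distr)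
        also have "x [^] m \<otimes> (\<ominus> (x \<otimes> r)) = \<ominus> (x [^] m \<otimes> t)"
          using c1 by (simp add: r_minus e2)
        finally show ?thesis using c1 t(2) by (simp add: r_neg)
      qed
      interpret Q: primeideal Q R by fact
      have "\<zero> \<in> Q" using Q.additive_subgroup_axioms by (simp add: additive_subgroup.zero_closed)
      hence "x [^] m \<otimes> (t \<ominus> x \<otimes> r) \<in> Q" using eq by simp
      hence "x [^] m \<in> Q \<or> t \<ominus> x \<otimes> r \<in> Q"
        by (intro Q.I_prime) (use xc r t in auto)
      moreover have "t \<ominus> x \<otimes> r \<notin> p"
      proof
        assume "t \<ominus> x \<otimes> r \<in> p"
        moreover have "x \<otimes> r \<in> p" using xp r P.I_r_closed by blast
        ultimately have "(t \<ominus> x \<otimes> r) \<oplus> x \<otimes> r \<in> p" using P.a_closed by blast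
        moreover have "(t \<ominus> x \<otimes> r) \<oplus> x \<otimes> r = t" using t xc r
          by (simp add: minus_eq a_assoc l_neg)
        ultimately show False using t by simp
      qed
      ultimately have "x [^] m \<in> Q" using Qp by blast
      thus "x \<in> Q" using pow_in_prime[OF Qp(1) xc] by blast
    qed
  qed
  thus ?thesis unfolding minimal_prime_def using assms(2) by blast
qed

end
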